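(* Let $G$ be an instance, $b>1$ and $R\ge 0$. If $H$ is a minimal motivating subgraph of $G$ for reward $R$, then the edge set of $H$ forms a single directed path from $s$ to $t$.
   Context: An instance is a finite directed acyclic graph $G=(V,E)$ with nonnegative edge costs $c(u,v)$, start node $s$ and target node $t$, where $t$ has no outgoing edges. For a subgraph $H$ of $G$ (obtained by deleting edges), the sophisticated agent with bias $b$ and reward $R$ at $t$ behaves in $H$ as follows: process nodes in reverse topological order; $t$ is never abandoned and $C_R(t)=0$; for $u\ne t$, among out-edges $(u,v)$ of $H$ with $v$ not abandoned let $P(u,v)=b\,c(u,v)+C_R(v)$; if none exists or all have $P(u,v)>R$, $u$ is abandoned; otherwise the agent at $u$ moves to $v^*(u)\in\arg\min P(u,v)$ and $C_R(u)=c(u,v^*(u))+C_R(v^*(u))$. The agent is motivated to traverse $H$ if $s$ is not abandoned in $H$. A minimal motivating subgraph for reward $R$ is a subgraph $H$ of $G$ that the agent is motivated to traverse for reward $R$, while it is not motivated to traverse any proper subgraph of $H$ for reward $R$. *)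

theory Defs
  imports Complex_Main
begin

definition is_instance :: "'v set \<Rightarrow> ('v \<times> 'v) set \<Rightarrow> ('v \<Rightarrow> 'v \<Rightarrow> real) \<Rightarrow> 'v \<Rightarrow> 'v \<Rightarrow> bool" where
  "is_instance V E c s t \<longleftrightarrow> finite V \<and> E \<subseteq> V \<times> V \<and> acyclic E
     \<and> (\<forall>u v. (u, v) \<in> E \<longrightarrow> 0 \<le> c u v) \<and> s \<in> V \<and> t \<in> V
     \<and> (\<forall>v. (t, v) \<notin> E)"

text \<open>Tie-breaking rule: given the subgraph H, the current node u and the (nonempty) set of
  minimisers of P(u,.), it selects one of them.\<close>
definition valid_tiebreak :: "(('v \<times> 'v) set \<Rightarrow> 'v \<Rightarrow> 'v set \<Rightarrow> 'v) \<Rightarrow> bool" where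
  "valid_tiebreak sel \<longleftrightarrow> (\<forall>H u A. A \<noteq> {} \<longrightarrow> sel H u A \<in> A)"

text \<open>The value at node u is
  None if u is abandoned, and Some (C_R u) otherwise.\<close>
definition agent_val ::
  "(('v \<times> 'v) set \<Rightarrow> 'v \<Rightarrow> 'v set \<Rightarrow> 'v) \<Rightarrow> ('v \<Rightarrow> 'v \<Rightarrow> real) \<Rightarrow> 'v \<Rightarrow> real \<Rightarrow> real
    \<Rightarrow> ('v \<times> 'v) set \<Rightarrow> 'v \<Rightarrow> real option" where
  "agent_val sel c t b R H = wfrec {(v, u). (u, v) \<in> H}
     (\<lambda>f u. if u = t then Some 0 else
        (let cand = {v. (u, v) \<in> H \<and> f v \<noteq> None};
             P = (\<lambda>v. b * c u v + the (f v))
         in if cand = {} \<or> (\<forall>v\<in>cand. P v > R) then None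
            else (let A = {v \<in> cand. P v = Min (P ` cand)};
                      w = sel H u A
                  in Some (c u w + the (f w)))))"

definition motivated ::
  "(('v \<times> 'v) set \<Rightarrow> 'v \<Rightarrow> 'v set \<Rightarrow> 'v) \<Rightarrow> ('v \<Rightarrow> 'v \<Rightarrow> real) \<Rightarrow> 'v \<Rightarrow> 'v \<Rightarrow> real \<Rightarrow> real
    \<Rightarrow> ('v \<times> 'v) set \<Rightarrow> bool" where
  "motivated sel c s t b R H \<longleftrightarrow> agent_val sel c t b R H s \<noteq> None"

definition minimal_motivating ::
  "(('v \<times> 'v) set \<Rightarrow> 'v \<Rightarrow> 'v set \<Rightarrow> 'v) \<Rightarrow> ('v \<times> 'v) set \<Rightarrow> ('v \<Rightarrow> 'v \<Rightarrow> real) \<Rightarrow> 'v \<Rightarrow> 'v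
    \<Rightarrow> real \<Rightarrow> real \<Rightarrow> ('v \<times> 'v) set \<Rightarrow> bool" where
  "minimal_motivating sel E c s t b R H \<longleftrightarrow> H \<subseteq> E \<and> motivated sel c s t b R H
     \<and> (\<forall>H'. H' \<subset> H \<longrightarrow> \<not> motivated sel c s t b R H')"

end

theory Submission
  imports Defs
begin

lemma agent_val_unfold:
  assumes wf: "wf {(v,u). (u,v) \<in> H}" and fin: "finite H" and vt: "valid_tiebreak sel"
  shows "agent_val sel c t b R H u = (if u = t then Some 0 else
        (let cand = {v. (u, v) \<in> H \<and> agent_val sel c t b R H v \<noteq> None};
             P = (\<lambda>v. b * c u v + the (agent_val sel c t b R H v))
         in if cand = {} \<or> (\<forall>v\<in>cand. P v > R) then None
            else (let A = {v \<in> cand. P v = Min (P ` cand)};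
                      w = sel H u A
                  in Some (c u w + the (agent_val sel c t b R H w)))))"
proof -
  define F where "F = (\<lambda>f u. if u = t then Some 0 else
        (let cand = {v. (u, v) \<in> H \<and> f v \<noteq> None};
             P = (\<lambda>v. b * c u v + the (f v))
         in if cand = {} \<or> (\<forall>v\<in>cand. P v > R) then None
            else (let A = {v \<in> cand. P v = Min (P ` cand)};
                      w = sel H u A
                  in Some (c u w + the (f w)))))"
  have adm: "adm_wf {(v,u). (u,v) \<in> H} F"
  proof (unfold adm_wf_def, intro allI impI)
    fix f g :: "'a \<Rightarrow> real option" and x
    assume "\<forall>z. (z, x) \<in> {(v,u). (u,v) \<in> H} \<longrightarrow> f z = g z"
    hence h: "\<And>v. (x,v) \<in> H \<Longrightarrow> f v = g v" by auto
    define cand where "cand = {v. (x, v) \<in> H \<and> f v \<noteq> None}"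
    define P where "P = (\<lambda>v. b * c x v + the (f v))"
    have cg: "{v. (x, v) \<in> H \<and> g v \<noteq> None} = cand" using h by (auto simp: cand_def)
    have im: "(\<lambda>v. b * c x v + the (g v)) ` cand = P ` cand"
      using h by (auto simp: P_def cand_def intro!: image_cong)
    have Ag: "{v \<in> cand. b * c x v + the (g v) = Min (P ` cand)} = {v \<in> cand. P v = Min (P ` cand)}"
      using h by (auto simp: P_def cand_def)
    have fc: "finite cand"
    proof -
      have "cand \<subseteq> snd ` H" by (force simp: cand_def)
      thus ?thesis using fin finite_subset by blast
    qed
    show "F f x = F g x"
    proof (cases "x = t")
      case True then show ?thesis by (simp add: F_def)
    next
      case False
      show ?thesis
      proof (cases "cand = {} \<or> (\<forall>v\<in>cand. P v > R)")
        case True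
        have "\<And>v. v \<in> cand \<Longrightarrow> b * c x v + the (g v) = P v" using h by (auto simp: P_def cand_def)
        then have "\<forall>v\<in>cand. R < b * c x v + the (g v)" if "cand \<noteq> {}" using True that by auto
        then have "F g x = None" unfolding F_def Let_def cg using False True by auto
        moreover have "F f x = None" using False True
          by (auto simp: F_def Let_def cand_def P_def)
        ultimately show ?thesis by simp
      next
        case c2: False
        define A where "A = {v \<in> cand. P v = Min (P ` cand)}"
        have "A \<noteq> {}"
        proof -
          have "Min (P ` cand) \<in> P ` cand" using c2 fc by auto
          thus ?thesis by (auto simp: A_def)
        qed
        hence "sel H x A \<in> A" using vt by (simp add: valid_tiebreak_def)
        hence gw: "g (sel H x A) = f (sel H x A)" using h by (auto simp: A_def cand_def)
        have gP: "\<And>v. v \<in> cand \<Longrightarrow> b * c x v + the (g v) = P v" using h by (auto simp: P_def cand_def)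
        have Pv: "\<And>v. b * c x v + the (f v) = P v" by (simp add: P_def)
        have "F f x = Some (c x (sel H x A) + the (f (sel H x A)))"
          unfolding F_def Let_def Pv cand_def[symmetric]
          using False c2 by (simp add: A_def)
        moreover have "F g x = Some (c x (sel H x A) + the (g (sel H x A)))"
          unfolding F_def Let_def cg im Ag
          using False c2 gP by (auto simp: A_def)
        ultimately show ?thesis using gw by simp
      qed
    qed
  qed
  have e1: "agent_val sel c t b R H = wfrec {(v,u). (u,v) \<in> H} F"
    unfolding agent_val_def F_def by simp
  have "agent_val sel c t b R H = F (agent_val sel c t b R H)"
    unfolding e1 by (rule wfrec_fixpoint[OF wf adm])
  from fun_cong[OF this, of u] show ?thesis unfolding F_def .
qed

lemma agent_step:
  assumes wf: "wf {(v,u). (u,v) \<in> H}" and fin: "finite H" and vt: "valid_tiebreak sel"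
    and ne: "agent_val sel c t b R H u \<noteq> None" and ut: "u \<noteq> t"
  shows "\<exists>w. (u,w) \<in> H \<and> agent_val sel c t b R H w \<noteq> None
     \<and> agent_val sel c t b R H u = Some (c u w + the (agent_val sel c t b R H w))
     \<and> b * c u w + the (agent_val sel c t b R H w) \<le> R"
proof -
  define f where "f = agent_val sel c t b R H"
  define cand where "cand = {v. (u, v) \<in> H \<and> f v \<noteq> None}"
  define P where "P = (\<lambda>v. b * c u v + the (f v))"
  have Pv: "\<And>v. b * c u v + the (f v) = P v" by (simp add: P_def)
  have fc: "finite cand"
  proof -
    have "cand \<subseteq> snd ` H" by (force simp: cand_def)
    thus ?thesis using fin finite_subset by blast
  qed
  have U: "f u = (if cand = {} \<or> (\<forall>v\<in>cand. P v > R) then None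
            else (let A = {v \<in> cand. P v = Min (P ` cand)};
                      w = sel H u A
                  in Some (c u w + the (f w))))"
    using agent_val_unfold[OF wf fin vt, of c t b R u] ut
    unfolding f_def[symmetric] Let_def Pv cand_def[symmetric] by simp
  have fu: "f u \<noteq> None" using ne by (simp add: f_def)
  have c2: "\<not> (cand = {} \<or> (\<forall>v\<in>cand. P v > R))"
  proof
    assume "cand = {} \<or> (\<forall>v\<in>cand. P v > R)"
    hence "f u = None" using U by simp
    thus False using fu by simp
  qed
  define A where "A = {v \<in> cand. P v = Min (P ` cand)}"
  have "Min (P ` cand) \<in> P ` cand" using c2 fc by auto
  hence "A \<noteq> {}" by (auto simp: A_def)
  hence wA: "sel H u A \<in> A" using vt by (simp add: valid_tiebreak_def)
  obtain v where v: "v \<in> cand" "P v \<le> R" using c2 by force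
  have "Min (P ` cand) \<le> P v" using fc v by auto
  hence "P (sel H u A) \<le> R" using wA v by (auto simp: A_def)
  moreover have "f u = Some (c u (sel H u A) + the (f (sel H u A)))"
    using U c2 by (simp add: A_def Let_def)
  ultimately show ?thesis using wA unfolding f_def[symmetric]
    by (intro exI[of _ "sel H u A"]) (auto simp: A_def cand_def P_def)
qed

lemma path_exists:
  assumes wf: "wf {(v,u). (u,v) \<in> H}" and fin: "finite H" and vt: "valid_tiebreak sel"
    and acy: "acyclic H"
  shows "agent_val sel c t b R H u \<noteq> None \<Longrightarrow> \<exists>p. p \<noteq> [] \<and> hd p = u \<and> last p = t \<and> distinct p
     \<and> set p \<subseteq> {x. (u,x) \<in> H\<^sup>*}
     \<and> (\<forall>(x,y)\<in>set (zip p (tl p)). (x,y) \<in> H \<and> x \<noteq> t \<and> agent_val sel c t b R H y \<noteq> None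
        \<and> agent_val sel c t b R H x = Some (c x y + the (agent_val sel c t b R H y))
        \<and> b * c x y + the (agent_val sel c t b R H y) \<le> R)"
proof (induction u rule: wf_induct[OF wf])
  case (1 u)
  show ?case
  proof (cases "u = t")
    case True
    then show ?thesis by (intro exI[of _ "[t]"]) auto
  next
    case False
    obtain w where w: "(u,w) \<in> H" "agent_val sel c t b R H w \<noteq> None"
      "agent_val sel c t b R H u = Some (c u w + the (agent_val sel c t b R H w))"
      "b * c u w + the (agent_val sel c t b R H w) \<le> R"
      using agent_step[OF wf fin vt "1.prems" False] by blast
    have "(w,u) \<in> {(v,u). (u,v) \<in> H}" using w by simp
    from "1.IH"[rule_format, OF this w(2)] obtain q where q: "q \<noteq> []" "hd q = w" "last q = t" "distinct q"
      "set q \<subseteq> {x. (w,x) \<in> H\<^sup>*}"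
      "\<forall>(x,y)\<in>set (zip q (tl q)). (x,y) \<in> H \<and> x \<noteq> t \<and> agent_val sel c t b R H y \<noteq> None
        \<and> agent_val sel c t b R H x = Some (c x y + the (agent_val sel c t b R H y))
        \<and> b * c x y + the (agent_val sel c t b R H y) \<le> R" by blast
    obtain q' where qq: "q = w # q'" using q(1,2) by (cases q) auto
    have "u \<notin> set q"
    proof
      assume "u \<in> set q"
      hence "(w,u) \<in> H\<^sup>*" using q(5) by auto
      hence "(u,u) \<in> H\<^sup>+" using w(1) by (meson rtrancl_into_trancl2)
      thus False using acy by (simp add: acyclic_def)
    qed
    moreover have "set (u#q) \<subseteq> {x. (u,x) \<in> H\<^sup>*}"
      using q(5) w(1) by (auto intro: converse_rtrancl_into_rtrancl)
    moreover have "zip (u#q) (tl (u#q)) = (u,w) # zip q (tl q)" using qq by simp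
    ultimately show ?thesis using q w False
      by (intro exI[of _ "u#q"]) auto
  qed
qed

lemma zip_tl_uniq: "distinct p \<Longrightarrow> (x,y) \<in> set (zip p (tl p)) \<Longrightarrow> (x,y') \<in> set (zip p (tl p)) \<Longrightarrow> y = y'"
proof (induction p)
  case Nil then show ?case by simp
next
  case (Cons a p)
  then show ?case
    by (cases p) (auto dest: set_zip_leftD)
qed

lemma zip_tl_ex: "v \<in> set p \<Longrightarrow> v \<noteq> last p \<Longrightarrow> \<exists>y. (v,y) \<in> set (zip p (tl p))"
proof (induction p)
  case Nil then show ?case by simp
next
  case (Cons a p)
  then show ?case
    by (cases p) auto
qed

lemma zip_tl_right: "(x,y) \<in> set (zip p (tl p)) \<Longrightarrow> y \<in> set p"
  by (cases p) (auto dest: set_zip_rightD)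

lemma path_val:
  fixes f :: "'v \<Rightarrow> real option"
  assumes vt: "valid_tiebreak sel" and dp: "distinct p" and lp: "last p = t" and pn: "p \<noteq> []"
    and ft: "f t = Some 0"
    and pr: "\<forall>(x,y)\<in>set (zip p (tl p)). x \<noteq> t \<and> f y \<noteq> None
        \<and> f x = Some (c x y + the (f y)) \<and> b * c x y + the (f y) \<le> R"
    and wfK: "wf {(v,u). (u,v) \<in> set (zip p (tl p))}"
  shows "v \<in> set p \<Longrightarrow> agent_val sel c t b R (set (zip p (tl p))) v = f v"
proof (induction v rule: wf_induct[OF wfK])
  case (1 v)
  define K where "K = set (zip p (tl p))"
  have finK: "finite K" by (simp add: K_def)
  have wfK': "wf {(v,u). (u,v) \<in> K}" using wfK by (simp add: K_def)
  note U = agent_val_unfold[OF wfK' finK vt, of c t b R]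
  show ?case
  proof (cases "v = t")
    case True then show ?thesis using U ft by (simp add: K_def)
  next
    case False
    then obtain y where y: "(v,y) \<in> K" using zip_tl_ex[OF "1.prems"] lp by (auto simp: K_def)
    have yp: "y \<in> set p" using y zip_tl_right by (fastforce simp: K_def)
    have IH: "agent_val sel c t b R K y = f y" using "1.IH" y yp by (auto simp: K_def)
    have py: "v \<noteq> t" "f y \<noteq> None" "f v = Some (c v y + the (f y))" "b * c v y + the (f y) \<le> R"
      using pr y by (auto simp: K_def)
    have cand: "{w. (v, w) \<in> K \<and> agent_val sel c t b R K w \<noteq> None} = {y}"
      using y IH py(2) zip_tl_uniq[OF dp] by (auto simp: K_def)
    have "sel K v {y} \<in> {y}" using vt unfolding valid_tiebreak_def by blast
    hence sy: "sel K v {y} = y" by simp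
    have "agent_val sel c t b R K v = Some (c v y + the (f y))"
    proof -
      have Ay: "\<And>Q :: 'v \<Rightarrow> real. {w \<in> {y}. Q w = Min (Q ` {y})} = {y}" by auto
      show ?thesis using U[of v] False py(4) unfolding cand Let_def Ay sy IH by (simp add: IH)
    qed
    then show ?thesis using py(3) by (simp add: K_def)
  qed
qed

theorem claim3:
  fixes V :: "'v set" and E :: "('v \<times> 'v) set" and c :: "'v \<Rightarrow> 'v \<Rightarrow> real"
    and s t :: 'v and b R :: real and H :: "('v \<times> 'v) set"
    and sel :: "('v \<times> 'v) set \<Rightarrow> 'v \<Rightarrow> 'v set \<Rightarrow> 'v"
  assumes "is_instance V E c s t" and "b > 1" and "R \<ge> 0"
    and "valid_tiebreak sel"
    and "minimal_motivating sel E c s t b R H"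
  shows "\<exists>p. p \<noteq> [] \<and> distinct p \<and> hd p = s \<and> last p = t \<and> H = set (zip p (tl p))"
proof -
  have fV: "finite V" and EV: "E \<subseteq> V \<times> V" and acE: "acyclic E"
    using assms(1) by (auto simp: is_instance_def)
  have HE: "H \<subseteq> E" and mot: "motivated sel c s t b R H"
    and mini: "\<forall>H'. H' \<subset> H \<longrightarrow> \<not> motivated sel c s t b R H'"
    using assms(5) by (auto simp: minimal_motivating_def)
  have finE: "finite E" using fV EV finite_subset by blast
  have finH: "finite H" using HE finE finite_subset by blast
  have acH: "acyclic H" using acE HE acyclic_subset by blast
  have wfgen: "\<And>K. K \<subseteq> H \<Longrightarrow> wf {(v,u). (u,v) \<in> K}"
  proof -
    fix K assume "K \<subseteq> H"
    hence "finite K" "acyclic K" using finH acH finite_subset acyclic_subset by blast+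
    hence "wf (K\<inverse>)" by (rule finite_acyclic_wf_converse)
    moreover have "K\<inverse> = {(v,u). (u,v) \<in> K}" by auto
    ultimately show "wf {(v,u). (u,v) \<in> K}" by simp
  qed
  have wfH: "wf {(v,u). (u,v) \<in> H}" using wfgen by blast
  have sn: "agent_val sel c t b R H s \<noteq> None" using mot by (simp add: motivated_def)
  obtain p where p: "p \<noteq> []" "hd p = s" "last p = t" "distinct p"
     "\<forall>(x,y)\<in>set (zip p (tl p)). (x,y) \<in> H \<and> x \<noteq> t \<and> agent_val sel c t b R H y \<noteq> None
        \<and> agent_val sel c t b R H x = Some (c x y + the (agent_val sel c t b R H y))
        \<and> b * c x y + the (agent_val sel c t b R H y) \<le> R"
    using path_exists[OF wfH finH assms(4) acH sn] by blast
  define K where "K = set (zip p (tl p))"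
  have KH: "K \<subseteq> H" using p(5) by (auto simp: K_def)
  have ft: "agent_val sel c t b R H t = Some 0"
    using agent_val_unfold[OF wfH finH assms(4), of c t b R t] by simp
  have sp: "s \<in> set p" using p(1,2) by (cases p) auto
  have pr: "\<forall>(x,y)\<in>set (zip p (tl p)). x \<noteq> t \<and> agent_val sel c t b R H y \<noteq> None
        \<and> agent_val sel c t b R H x = Some (c x y + the (agent_val sel c t b R H y))
        \<and> b * c x y + the (agent_val sel c t b R H y) \<le> R" using p(5) by auto
  have "agent_val sel c t b R K s = agent_val sel c t b R H s"
    unfolding K_def
    by (rule path_val[OF assms(4) p(4) p(3) p(1) ft pr wfgen[OF KH[unfolded K_def]] sp])
  hence "motivated sel c s t b R K" using sn by (simp add: motivated_def)
  hence "\<not> K \<subset> H" using mini by blast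
  hence "H = K" using KH by blast
  thus ?thesis using p unfolding K_def by blast
qed

end
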